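(* Let $P$ and $Q$ be real polynomials. Then $P^2\preceq P$ holds if and only if $0\preceq P\preceq1$. Furthermore, if $P^2\preceq P$ and $0\preceq Q\preceq P$, then $Q^2\preceq Q$.
   Context: For real polynomials $P,Q$ (in finitely many variables), $P\preceq Q$ means $Q=P+\sum_{i=1}^m R_i^2$ for some polynomials $R_1,\dots,R_m$; $0\preceq P$ means $P$ is a sum of squares and $P\preceq1$ means $1-P$ is a sum of squares. *)

theory Defs
  imports Complex_Main "HOL-Library.Poly_Mapping"
begin

text \<open>Real polynomials in finitely many variables: the standard representation of
  the polynomial ring R[x_0, x_1, ...] as finitely supported maps from monomials
  (finitely supported exponent vectors nat \<Rightarrow>0 nat) to coefficients.\<close>
type_synonym rpoly = "(nat \<Rightarrow>\<^sub>0 nat) \<Rightarrow>\<^sub>0 real"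

definition is_sos :: "rpoly \<Rightarrow> bool" where
  "is_sos P \<longleftrightarrow> (\<exists>Rs :: rpoly list. P = sum_list (map (\<lambda>R. R ^ 2) Rs))"

definition sos_le :: "rpoly \<Rightarrow> rpoly \<Rightarrow> bool" (infix "\<preceq>" 50) where
  "P \<preceq> Q \<longleftrightarrow> (\<exists>Rs :: rpoly list. Q = P + sum_list (map (\<lambda>R. R ^ 2) Rs))"

end

theory Submission
  imports Defs
begin

definition sosg :: "'a::comm_ring_1 \<Rightarrow> bool" where
  "sosg x \<longleftrightarrow> (\<exists>Rs. x = sum_list (map (\<lambda>R. R ^ 2) Rs))"

lemma sosg_add: "sosg a \<Longrightarrow> sosg b \<Longrightarrow> sosg (a + b)"
  unfolding sosg_def by (metis map_append sum_list_append)

lemma sosg_sq: "sosg (x ^ 2)"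
  unfolding sosg_def by (rule exI[of _ "[x]"]) simp

lemma sosg_0: "sosg 0"
  unfolding sosg_def by (rule exI[of _ "[]"]) simp

lemma sq_mult_sum: "(x::'a::comm_ring_1)^2 * sum_list (map (\<lambda>R. R ^ 2) Ss)
   = sum_list (map (\<lambda>R. R ^ 2) (map ((*) x) Ss))"
  by (induction Ss) (auto simp: algebra_simps power_mult_distrib)

lemma sosg_mult: "sosg a \<Longrightarrow> sosg b \<Longrightarrow> sosg (a * b)"
proof -
  assume "sosg a" "sosg b"
  then obtain Rs Ss where a: "a = sum_list (map (\<lambda>R. R ^ 2) Rs)"
    and b: "b = sum_list (map (\<lambda>R. R ^ 2) Ss)" unfolding sosg_def by blast
  have "sosg (sum_list (map (\<lambda>R. R ^ 2) Rs) * b)"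
  proof (induction Rs)
    case Nil then show ?case using sosg_0 by simp
  next
    case (Cons x Rs)
    have "sosg (x^2 * b)" unfolding b sq_mult_sum sosg_def by blast
    then show ?case using Cons sosg_add by (simp add: distrib_right)
  qed
  then show ?thesis using a by simp
qed

lemma le_iff: "P \<preceq> Q \<longleftrightarrow> sosg (Q - P)"
  unfolding sos_le_def sosg_def by (auto simp: algebra_simps)

theorem lemmaA1:
  fixes P Q :: rpoly
  shows "(P ^ 2 \<preceq> P \<longleftrightarrow> (0 \<preceq> P \<and> P \<preceq> 1))
     \<and> ((P ^ 2 \<preceq> P \<and> 0 \<preceq> Q \<and> Q \<preceq> P) \<longrightarrow> Q ^ 2 \<preceq> Q)"
proof -
  have main: "(X ^ 2 \<preceq> X \<longleftrightarrow> (0 \<preceq> X \<and> X \<preceq> 1))" for X :: rpoly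
  proof
    assume "X ^ 2 \<preceq> X"
    then have h: "sosg (X - X^2)" by (simp add: le_iff)
    have "X = X^2 + (X - X^2)" by simp
    then have "sosg X" using sosg_add[OF sosg_sq h] by metis
    moreover have "1 - X = (1 - X)^2 + (X - X^2)" by (simp add: power2_eq_square algebra_simps)
    then have "sosg (1 - X)" using sosg_add[OF sosg_sq h] by metis
    ultimately show "0 \<preceq> X \<and> X \<preceq> 1" by (simp add: le_iff)
  next
    assume "0 \<preceq> X \<and> X \<preceq> 1"
    then have "sosg (X * (1 - X))" by (simp add: le_iff sosg_mult)
    moreover have "X * (1 - X) = X - X^2" by (simp add: power2_eq_square algebra_simps)
    ultimately show "X ^ 2 \<preceq> X" by (simp add: le_iff)
  qed
  have "Q ^ 2 \<preceq> Q" if "P ^ 2 \<preceq> P" "0 \<preceq> Q" "Q \<preceq> P"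
  proof -
    have "P \<preceq> 1" using main that(1) by blast
    then have "sosg ((1 - P) + (P - Q))" using that(3) by (simp only: le_iff sosg_add)
    moreover have "(1 - P) + (P - Q) = 1 - Q" by simp
    ultimately have "Q \<preceq> 1" by (simp only: le_iff)
    then show ?thesis using main that(2) by blast
  qed
  then show ?thesis using main by blast
qed

end
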